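(* Under the setup described in the context, with $\bar c:=n+\min\{k,n-k\}-s+2gn/s$, $$\mathrm{P}\big[c\le\bar c\ \text{and}\ \hat n<4gn/s\big]\ge 1-4e^{-2g^2/s}.$$
   Context: Sampling setup. Let $X=(x_1,\dots,x_n)$ be a list of $n\ge 2$ elements of a totally ordered set; repeated values are allowed. Let $k$ be an integer with $1\le k\le n$, let $s$ be an integer with $1\le s\le n-1$, and let $g>0$ be real. A set $I\subset\{1,\dots,n\}$ of $s$ positions is chosen uniformly at random among all $s$-element subsets. The sample $(x_j)_{j\in I}$ has sorted elements $y_1^*\le\dots\le y_s^*$. Define $i_u:=\max\{\lceil ks/n-g\rceil,1\}$, $i_v:=\min\{\lceil ks/n+g\rceil,s\}$, $u:=y_{i_u}^*$ and $v:=y_{i_v}^*$. Comparison count $c$: - $c=n-s$ if $u=v$; - $c=(n-s)+|\{j\notin I: x_j<v\}|$ if $u<v$ and $k<n/2$; - $c=(n-s)+|\{j\notin I: x_j>u\}|$ if $u<v$ and $k\ge n/2$. This is the number of comparisons when each non-sampled element is compared to $v$ first (to $u$ first if $k\ge n/2$), and to the other pivot only when necessary. Residual size $\hat n$. Let $L=\{j:x_j<u\}$, $U=\{j:x_j=u\}$, $M=\{j:u<x_j<v\}$ and $R=\{j:x_j>v\}$. Apply the first applicable rule: 1. If $|L|<k\le|L\cup U|$ or $|L\cup U\cup M|<k\le n-|R|$, then $\hat n:=0$. 2. Otherwise, if $k\le|L|$, then $\hat n:=|L|$. 3. Otherwise, if $n-|R|<k$, then $\hat n:=|R|$. 4. Otherwise,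 $\hat n:=|M|$. $\mathrm{P}$ is probability with respect to the random choice of $I$. *)

theory Defs
  imports "HOL-Probability.Probability"
begin

text \<open>The list X = xs has positions 0..<n (0-indexed; the paper uses 1..n).
  A sample is a set I of positions.\<close>

definition sample_sorted :: "'a::linorder list \<Rightarrow> nat set \<Rightarrow> 'a list" where
  "sample_sorted xs I = sort (map (\<lambda>j. xs ! j) (sorted_list_of_set I))"

definition ystar :: "'a::linorder list \<Rightarrow> nat set \<Rightarrow> nat \<Rightarrow> 'a" where
  "ystar xs I i = sample_sorted xs I ! (i - 1)"

definition idx_u :: "nat \<Rightarrow> nat \<Rightarrow> nat \<Rightarrow> real \<Rightarrow> nat" where
  "idx_u n k s g = nat (max (\<lceil>real k * real s / real n - g\<rceil>) 1)"

definition idx_v :: "nat \<Rightarrow> nat \<Rightarrow> nat \<Rightarrow> real \<Rightarrow> nat" where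
  "idx_v n k s g = nat (min (\<lceil>real k * real s / real n + g\<rceil>) (int s))"

definition pivot_u :: "'a::linorder list \<Rightarrow> nat \<Rightarrow> nat \<Rightarrow> real \<Rightarrow> nat set \<Rightarrow> 'a" where
  "pivot_u xs k s g I = ystar xs I (idx_u (length xs) k s g)"

definition pivot_v :: "'a::linorder list \<Rightarrow> nat \<Rightarrow> nat \<Rightarrow> real \<Rightarrow> nat set \<Rightarrow> 'a" where
  "pivot_v xs k s g I = ystar xs I (idx_v (length xs) k s g)"

definition comparisons :: "'a::linorder list \<Rightarrow> nat \<Rightarrow> nat \<Rightarrow> real \<Rightarrow> nat set \<Rightarrow> nat" where
  "comparisons xs k s g I =
    (let n = length xs; u = pivot_u xs k s g I; v = pivot_v xs k s g I in
     if u = v then n - s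
     else if real k < real n / 2 then (n - s) + card {j\<in>{..<n}. j \<notin> I \<and> xs ! j < v}
     else (n - s) + card {j\<in>{..<n}. j \<notin> I \<and> xs ! j > u})"

definition residual_size :: "'a::linorder list \<Rightarrow> nat \<Rightarrow> nat \<Rightarrow> real \<Rightarrow> nat set \<Rightarrow> nat" where
  "residual_size xs k s g I =
    (let n = length xs; u = pivot_u xs k s g I; v = pivot_v xs k s g I;
         L = {j\<in>{..<n}. xs ! j < u}; U = {j\<in>{..<n}. xs ! j = u};
         M = {j\<in>{..<n}. u < xs ! j \<and> xs ! j < v}; R = {j\<in>{..<n}. xs ! j > v} in
     if (card L < k \<and> k \<le> card (L \<union> U)) \<or> (card (L \<union> U \<union> M) < k \<and> k \<le> n - card R) then 0
     else if k \<le> card L then card L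
     else if n - card R < k then card R
     else card M)"

definition sample_dist :: "nat \<Rightarrow> nat \<Rightarrow> nat set pmf" where
  "sample_dist n s = pmf_of_set {I. I \<subseteq> {..<n} \<and> card I = s}"

end

theory Submission
  imports Defs
begin


lemma pow_sum_card:
  fixes a :: real
  assumes "finite B"
  shows "(1 + a) ^ card B = (\<Sum>J\<in>Pow B. a ^ card J)"
proof -
  have "(\<Prod>x\<in>B. a + 1) = (\<Sum>X\<in>Pow B. (\<Prod>x\<in>X. a) * (\<Prod>x\<in>B-X. 1))"
    by (rule prod_add[OF assms])
  thus ?thesis by (simp add: add.commute)
qed

lemma count_supsets:
  assumes J: "J \<subseteq> {..<n}"
  shows "card {I. I \<subseteq> {..<n} \<and> card I = s \<and> J \<subseteq> I}
       = (if card J \<le> s then (n - card J) choose (s - card J) else 0)"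
proof (cases "card J \<le> s")
  case False
  have "{I. I \<subseteq> {..<n} \<and> card I = s \<and> J \<subseteq> I} = {}"
  proof (safe)
    fix I assume "I \<subseteq> {..<n}" "J \<subseteq> I" "s = card I"
    then have "card J \<le> card I" by (meson card_mono finite_lessThan finite_subset)
    with False \<open>s = card I\<close> show "I \<in> {}" by simp
  qed
  with False show ?thesis by simp
next
  case True
  have fJ: "finite J" using J finite_subset by blast
  have "bij_betw (\<lambda>I. I - J) {I. I \<subseteq> {..<n} \<and> card I = s \<and> J \<subseteq> I}
          {K. K \<subseteq> {..<n} - J \<and> card K = s - card J}"
  proof (rule bij_betw_byWitness[where f' = "\<lambda>K. K \<union> J"])
    show "\<forall>a\<in>{I. I \<subseteq> {..<n} \<and> card I = s \<and> J \<subseteq> I}. a - J \<union> J = a" by auto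
    show "\<forall>a\<in>{K. K \<subseteq> {..<n} - J \<and> card K = s - card J}. a \<union> J - J = a" by auto
    show "(\<lambda>I. I - J) ` {I. I \<subseteq> {..<n} \<and> card I = s \<and> J \<subseteq> I}
          \<subseteq> {K. K \<subseteq> {..<n} - J \<and> card K = s - card J}"
    proof safe
      fix I assume "I \<subseteq> {..<n}" "J \<subseteq> I" "s = card I"
      then show "card (I - J) = card I - card J"
        by (meson card_Diff_subset fJ)
    qed auto
    show "(\<lambda>K. K \<union> J) ` {K. K \<subseteq> {..<n} - J \<and> card K = s - card J}
          \<subseteq> {I. I \<subseteq> {..<n} \<and> card I = s \<and> J \<subseteq> I}"
    proof -
      have "card (K \<union> J) = s" if K: "K \<subseteq> {..<n} - J" "card K = s - card J" for K
      proof -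
        have fK: "finite K" using K(1) finite_subset by blast
        have "K \<inter> J = {}" using K(1) by blast
        then have "card (K \<union> J) = card K + card J" using fK fJ card_Un_disjoint by blast
        with K(2) True show ?thesis by simp
      qed
      then show ?thesis using J by auto
    qed
  qed
  then have "card {I. I \<subseteq> {..<n} \<and> card I = s \<and> J \<subseteq> I}
           = card {K. K \<subseteq> {..<n} - J \<and> card K = s - card J}"
    by (rule bij_betw_same_card)
  also have "\<dots> = card ({..<n} - J) choose (s - card J)"
    by (rule n_subsets) simp
  also have "card ({..<n} - J) = n - card J"
    using J fJ by (simp add: card_Diff_subset)
  finally show ?thesis using True by simp
qed

lemma sum_pow_group:
  fixes f :: "nat \<Rightarrow> real"
  assumes "finite A"
  shows "(\<Sum>J\<in>Pow A. f (card J)) = (\<Sum>j\<le>card A. real (card A choose j) * f j)"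
proof -
  have "(\<Sum>J\<in>Pow A. f (card J)) = (\<Sum>j\<le>card A. \<Sum>J\<in>{J. J \<in> Pow A \<and> card J = j}. f (card J))"
    by (rule sum.group[symmetric]) (use assms in \<open>auto intro: card_mono\<close>)
  also have "\<dots> = (\<Sum>j\<le>card A. real (card A choose j) * f j)"
  proof (rule sum.cong[OF refl])
    fix j
    have "(\<Sum>J\<in>{J. J \<in> Pow A \<and> card J = j}. f (card J)) = (\<Sum>J\<in>{J. J \<subseteq> A \<and> card J = j}. f j)"
      by (rule sum.cong) auto
    also have "\<dots> = real (card A choose j) * f j"
      using n_subsets[OF assms, of j] by simp
    finally show "(\<Sum>J\<in>{J. J \<in> Pow A \<and> card J = j}. f (card J)) = real (card A choose j) * f j" .
  qed
  finally show ?thesis .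
qed

lemma choose_Suc_real:
  assumes "j \<le> t"
  shows "real (Suc j) * real (t choose Suc j) = real (t choose j) * (real t - real j)"
proof -
  have "Suc j * (t choose Suc j) = (t - j) * (t choose j)"
    using binomial_absorption[of j t] binomial_absorb_comp[of t j] by simp
  then have "real (Suc j * (t choose Suc j)) = real ((t - j) * (t choose j))" by simp
  then show ?thesis using assms by (simp add: of_nat_diff algebra_simps)
qed

lemma choose_ratio_le:
  assumes "t \<le> n"
  shows "real (t choose j) * real n ^ j \<le> real (n choose j) * real t ^ j"
proof (induction j)
  case 0 then show ?case by simp
next
  case (Suc j)
  show ?case
  proof (cases "j \<le> t")
    case False
    then show ?thesis by (simp add: binomial_eq_0)
  next
    case True
    have jn: "j \<le> n" using True assms by simp
    have h1: "(real t - real j) * real n \<le> (real n - real j) * real t"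
      using True assms by (simp add: algebra_simps mult_left_mono)
    have "real (Suc j) * (real (t choose Suc j) * real n ^ Suc j)
        = (real (Suc j) * real (t choose Suc j)) * (real n ^ j * real n)"
      by (simp add: mult_ac del: of_nat_Suc)
    also have "\<dots> = (real (t choose j) * (real t - real j)) * (real n ^ j * real n)"
      by (simp only: choose_Suc_real[OF True])
    also have "\<dots> = (real (t choose j) * real n ^ j) * ((real t - real j) * real n)"
      by (simp add: mult_ac del: of_nat_Suc)
    also have "\<dots> \<le> (real (n choose j) * real t ^ j) * ((real t - real j) * real n)"
      by (rule mult_right_mono[OF Suc.IH]) (use True in simp)
    also have "\<dots> \<le> (real (n choose j) * real t ^ j) * ((real n - real j) * real t)"
      by (rule mult_left_mono[OF h1]) simp
    also have "\<dots> = (real (n choose j) * (real n - real j)) * (real t ^ j * real t)"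
      by (simp add: mult_ac del: of_nat_Suc)
    also have "\<dots> = (real (Suc j) * real (n choose Suc j)) * (real t ^ j * real t)"
      by (simp only: choose_Suc_real[OF jn])
    also have "\<dots> = real (Suc j) * (real (n choose Suc j) * real t ^ Suc j)"
      by (simp add: mult_ac del: of_nat_Suc)
    finally show ?thesis by (simp del: of_nat_Suc)
  qed
qed

lemma termwise_bound:
  fixes a :: real
  assumes "a \<ge> 0" "t \<le> n" "s \<le> n" "0 < n" "j \<le> t"
  shows "real (t choose j) * (a ^ j * real (if j \<le> s then (n - j) choose (s - j) else 0))
         \<le> real (n choose s) * (real (s choose j) * (a * real t / real n) ^ j)"
proof (cases "j \<le> s")
  case False
  then show ?thesis using assms by simp
next
  case True
  have jn: "j \<le> n" using assms by simp
  have cm: "real (n choose s) * real (s choose j) = real (n choose j) * real ((n - j) choose (s - j))"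
    using choose_mult[OF True assms(3)] by (metis of_nat_mult)
  have np: "real n ^ j > 0" using assms by simp
  have cr: "real (t choose j) \<le> real (n choose j) * (real t / real n) ^ j"
    using choose_ratio_le[OF assms(2), of j] np by (simp add: power_divide field_simps)
  have "real (t choose j) * (a ^ j * real ((n - j) choose (s - j)))
      \<le> (real (n choose j) * (real t / real n) ^ j) * (a ^ j * real ((n - j) choose (s - j)))"
    by (rule mult_right_mono[OF cr]) (use assms in simp)
  also have "\<dots> = (real (n choose s) * real (s choose j)) * (a * real t / real n) ^ j"
    unfolding cm by (simp add: power_mult_distrib power_divide mult_ac)
  finally show ?thesis using True by (simp add: mult_ac)
qed

lemma mgf_bound:
  fixes a :: real
  assumes a: "a \<ge> 0" and A: "A \<subseteq> {..<n}" and sn: "s \<le> n" and n: "0 < n"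
  shows "(\<Sum>I\<in>{I. I \<subseteq> {..<n} \<and> card I = s}. (1 + a) ^ card (I \<inter> A))
         \<le> real (n choose s) * (1 + a * real (card A) / real n) ^ s"
proof -
  define S where "S = {I. I \<subseteq> {..<n} \<and> card I = s}"
  define t where "t = card A"
  have fS: "finite S" unfolding S_def
    by (rule finite_subset[of _ "Pow {..<n}"]) auto
  have fA: "finite A" using A finite_subset by blast
  have tn: "t \<le> n" unfolding t_def using card_mono[OF _ A] by simp
  have "(\<Sum>I\<in>S. (1 + a) ^ card (I \<inter> A)) = (\<Sum>I\<in>S. \<Sum>J\<in>{J. J \<in> Pow A \<and> J \<subseteq> I}. a ^ card J)"
  proof (rule sum.cong[OF refl])
    fix I assume "I \<in> S"
    have "(1 + a) ^ card (I \<inter> A) = (\<Sum>J\<in>Pow (I \<inter> A). a ^ card J)"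
      by (rule pow_sum_card) (use fA in auto)
    also have "Pow (I \<inter> A) = {J. J \<in> Pow A \<and> J \<subseteq> I}" by auto
    finally show "(1 + a) ^ card (I \<inter> A) = (\<Sum>J\<in>{J. J \<in> Pow A \<and> J \<subseteq> I}. a ^ card J)" .
  qed
  also have "\<dots> = (\<Sum>J\<in>Pow A. \<Sum>I\<in>{I. I \<in> S \<and> J \<subseteq> I}. a ^ card J)"
    by (rule sum.swap_restrict) (use fS fA in auto)
  also have "\<dots> = (\<Sum>J\<in>Pow A. a ^ card J * real (if card J \<le> s then (n - card J) choose (s - card J) else 0))"
  proof (rule sum.cong[OF refl])
    fix J assume "J \<in> Pow A"
    then have J: "J \<subseteq> {..<n}" using A by auto
    have "{I. I \<in> S \<and> J \<subseteq> I} = {I. I \<subseteq> {..<n} \<and> card I = s \<and> J \<subseteq> I}"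
      unfolding S_def by auto
    then show "(\<Sum>I\<in>{I. I \<in> S \<and> J \<subseteq> I}. a ^ card J)
       = a ^ card J * real (if card J \<le> s then (n - card J) choose (s - card J) else 0)"
      using count_supsets[OF J, of s] by (simp add: mult.commute)
  qed
  also have "\<dots> = (\<Sum>j\<le>t. real (t choose j) * (a ^ j * real (if j \<le> s then (n - j) choose (s - j) else 0)))"
    unfolding t_def by (rule sum_pow_group[OF fA])
  also have "\<dots> \<le> (\<Sum>j\<le>t. real (n choose s) * (real (s choose j) * (a * real t / real n) ^ j))"
    by (rule sum_mono, rule termwise_bound) (use a tn sn n in auto)
  also have "\<dots> \<le> (\<Sum>j\<le>n. real (n choose s) * (real (s choose j) * (a * real t / real n) ^ j))"
    by (rule sum_mono2) (use tn a in auto)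
  also have "\<dots> = (\<Sum>j\<le>s. real (n choose s) * (real (s choose j) * (a * real t / real n) ^ j))"
    by (rule sum.mono_neutral_right) (use sn in \<open>auto simp: binomial_eq_0\<close>)
  also have "\<dots> = real (n choose s) * (\<Sum>j\<le>s. real (s choose j) * (a * real t / real n) ^ j * 1 ^ (s - j))"
    by (simp add: sum_distrib_left)
  also have "\<dots> = real (n choose s) * (a * real t / real n + 1) ^ s"
    by (simp only: binomial_ring)
  finally show ?thesis unfolding S_def t_def by (simp add: add.commute)
qed

lemma upper_tail:
  fixes g :: real
  assumes A: "A \<subseteq> {..<n}" and s1: "1 \<le> s" and sn: "s \<le> n" and g: "g > 0"
    and j: "real j \<ge> real (card A) * real s / real n + g"
  shows "real (card {I\<in>{I. I \<subseteq> {..<n} \<and> card I = s}. j \<le> card (I \<inter> A)})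
         \<le> exp (- 2 * g\<^sup>2 / real s) * real (n choose s)"
proof -
  define S where "S = {I. I \<subseteq> {..<n} \<and> card I = s}"
  define B where "B = {I\<in>S. j \<le> card (I \<inter> A)}"
  define l where "l = 4 * g / real s"
  define a where "a = exp l - 1"
  define p where "p = real (card A) / real n"
  have n: "0 < n" using s1 sn by simp
  have l: "l > 0" using g s1 by (simp add: l_def)
  have a: "a \<ge> 0" using l by (simp add: a_def)
  have p: "p \<ge> 0" by (simp add: p_def)
  have fS: "finite S" unfolding S_def
    by (rule finite_subset[of _ "Pow {..<n}"]) auto
  have BS: "B \<subseteq> S" by (auto simp: B_def)
  have fB: "finite B" using fS BS finite_subset by blast
  have "real (card B) * exp (l * real j) = (\<Sum>I\<in>B. exp (l * real j))" by simp
  also have "\<dots> \<le> (\<Sum>I\<in>B. (1 + a) ^ card (I \<inter> A))"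
  proof (rule sum_mono)
    fix I assume "I \<in> B"
    then have "j \<le> card (I \<inter> A)" by (simp add: B_def)
    then have "exp (l * real j) \<le> exp (real (card (I \<inter> A)) * l)"
      using l by (simp add: mult.commute mult_left_mono)
    also have "\<dots> = (1 + a) ^ card (I \<inter> A)" by (simp add: exp_of_nat_mult a_def)
    finally show "exp (l * real j) \<le> (1 + a) ^ card (I \<inter> A)" .
  qed
  also have "\<dots> \<le> (\<Sum>I\<in>S. (1 + a) ^ card (I \<inter> A))"
    by (rule sum_mono2[OF fS BS]) (use a in simp)
  also have "\<dots> \<le> real (n choose s) * (1 + a * p) ^ s"
    using mgf_bound[OF a A sn n] unfolding S_def p_def by (simp add: mult_ac)
  also have "(1 + a * p) ^ s \<le> exp (real s * (l * p + l\<^sup>2 / 8))"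
  proof -
    have pos: "1 + p * (exp l - 1) > 0" using l p
      by (intro add_pos_nonneg mult_nonneg_nonneg) auto
    have "-l * p + ln (1 + p * (exp l - 1)) \<le> l\<^sup>2 / 8"
      using Hoeffdings_lemma_aux[of l p] l p by simp
    then have "ln (1 + a * p) \<le> l * p + l\<^sup>2 / 8" by (simp add: a_def mult.commute)
    then have "exp (ln (1 + a * p)) \<le> exp (l * p + l\<^sup>2 / 8)" by simp
    then have "1 + a * p \<le> exp (l * p + l\<^sup>2 / 8)"
      using pos by (simp add: a_def mult.commute)
    then have "(1 + a * p) ^ s \<le> exp (l * p + l\<^sup>2 / 8) ^ s"
      by (rule power_mono) (use pos in \<open>simp add: a_def mult.commute\<close>)
    also have "\<dots> = exp (real s * (l * p + l\<^sup>2 / 8))" by (simp add: exp_of_nat_mult)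
    finally show ?thesis .
  qed
  finally have "real (card B) * exp (l * real j) \<le> real (n choose s) * exp (real s * (l * p + l\<^sup>2 / 8))"
    by (simp add: mult_left_mono)
  then have "real (card B) \<le> real (n choose s) * exp (real s * (l * p + l\<^sup>2 / 8)) / exp (l * real j)"
    by (simp add: field_simps)
  also have "\<dots> = real (n choose s) * exp (real s * (l * p + l\<^sup>2 / 8) - l * real j)"
    by (simp add: exp_diff)
  also have "\<dots> \<le> real (n choose s) * exp (- 2 * g\<^sup>2 / real s)"
  proof -
    have jj: "l * real j \<ge> l * (real s * p + g)"
      using j l by (intro mult_left_mono) (auto simp: p_def mult.commute)
    have "real s * (l * p + l\<^sup>2 / 8) - l * real j \<le> real s * (l * p + l\<^sup>2 / 8) - l * (real s * p + g)"
      using jj by linarith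
    also have "\<dots> = - 2 * g\<^sup>2 / real s"
      using s1 by (simp add: l_def power2_eq_square field_simps)
    finally show ?thesis by (intro mult_left_mono) simp_all
  qed
  finally show ?thesis unfolding B_def S_def by (simp add: mult.commute)
qed

lemma lower_tail:
  fixes g :: real
  assumes A: "A \<subseteq> {..<n}" and s1: "1 \<le> s" and sn: "s \<le> n" and g: "g > 0"
    and j: "real j \<le> real (card A) * real s / real n - g"
  shows "real (card {I\<in>{I. I \<subseteq> {..<n} \<and> card I = s}. card (I \<inter> A) \<le> j})
         \<le> exp (- 2 * g\<^sup>2 / real s) * real (n choose s)"
proof -
  define A' where "A' = {..<n} - A"
  have fA: "finite A" using A finite_subset by blast
  have cA': "card A' = n - card A" unfolding A'_def using A fA by (simp add: card_Diff_subset)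
  have tn: "card A \<le> n" using card_mono[OF _ A] by simp
  have "real (card A) * real s / real n \<le> real s"
    using tn sn s1 by (simp add: field_simps mult_right_mono)
  then have js: "j \<le> s" using j g by linarith
  have split: "card (I \<inter> A) + card (I \<inter> A') = s" if "I \<subseteq> {..<n}" "card I = s" for I
  proof -
    have "finite I" using that finite_subset by blast
    moreover have "I = (I \<inter> A) \<union> (I \<inter> A')" "(I \<inter> A) \<inter> (I \<inter> A') = {}"
      using that unfolding A'_def by auto
    ultimately have "card I = card (I \<inter> A) + card (I \<inter> A')"
      using card_Un_disjoint[of "I \<inter> A" "I \<inter> A'"] by simp
    then show ?thesis using that(2) by simp
  qed
  have eq: "{I\<in>{I. I \<subseteq> {..<n} \<and> card I = s}. card (I \<inter> A) \<le> j}
          = {I\<in>{I. I \<subseteq> {..<n} \<and> card I = s}. s - j \<le> card (I \<inter> A')}"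
  proof (rule Collect_cong)
    fix I
    show "(I \<in> {I. I \<subseteq> {..<n} \<and> card I = s} \<and> card (I \<inter> A) \<le> j) =
          (I \<in> {I. I \<subseteq> {..<n} \<and> card I = s} \<and> s - j \<le> card (I \<inter> A'))"
    proof (cases "I \<subseteq> {..<n} \<and> card I = s")
      case True
      then have "card (I \<inter> A) + card (I \<inter> A') = s" using split by blast
      then show ?thesis using True js by auto
    qed blast
  qed
  have "real (s - j) \<ge> real (card A') * real s / real n + g"
  proof -
    have n: "real n > 0" using s1 sn by simp
    have "real (card A') * real s / real n = real s - real (card A) * real s / real n"
      using tn n by (simp add: cA' of_nat_diff field_simps)
    then show ?thesis using j js by (simp add: of_nat_diff)
  qed
  from upper_tail[OF _ s1 sn g this]
  show ?thesis unfolding eq by (simp add: A'_def)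
qed



definition rk_list0 :: "'a::linorder list \<Rightarrow> nat list" where
  "rk_list0 xs = sort_key (\<lambda>j. xs ! j) [0..<length xs]"

definition rk_pos :: "'a::linorder list \<Rightarrow> nat \<Rightarrow> nat" where
  "rk_pos xs r = rk_list0 xs ! r"

definition rk_set :: "'a::linorder list \<Rightarrow> nat set \<Rightarrow> nat set" where
  "rk_set xs I = {r. r < length xs \<and> rk_pos xs r \<in> I}"

definition rk_sl :: "'a::linorder list \<Rightarrow> nat set \<Rightarrow> nat list" where
  "rk_sl xs I = sorted_list_of_set (rk_set xs I)"

lemma rk_list0_props:
  "length (rk_list0 xs) = length xs" "distinct (rk_list0 xs)" "set (rk_list0 xs) = {..<length xs}"
  "sorted (map (\<lambda>j. xs ! j) (rk_list0 xs))"
proof -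
  have m: "mset (rk_list0 xs) = mset [0..<length xs]" by (simp add: rk_list0_def)
  show "length (rk_list0 xs) = length xs" using mset_eq_length[OF m] by simp
  show "distinct (rk_list0 xs)" using m by (metis distinct_upt mset_eq_imp_distinct_iff)
  show "set (rk_list0 xs) = {..<length xs}" using mset_eq_setD[OF m] by auto
  show "sorted (map (\<lambda>j. xs ! j) (rk_list0 xs))" by (simp add: rk_list0_def)
qed

lemma rk_pos_bij: "bij_betw (rk_pos xs) {..<length xs} {..<length xs}"
proof -
  have "bij_betw (\<lambda>r. rk_list0 xs ! r) {..<length (rk_list0 xs)} (set (rk_list0 xs))"
    using rk_list0_props(2) by (rule bij_betw_nth) simp_all
  then show ?thesis unfolding rk_list0_props(1,3) by (simp add: rk_pos_def[abs_def])
qed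

lemma msl: "finite A \<Longrightarrow> mset (sorted_list_of_set A) = mset_set A"
  using mset_set_set[of "sorted_list_of_set A"] by simp

lemma rk_pos_lt: "r < length xs \<Longrightarrow> rk_pos xs r < length xs"
  using rk_pos_bij bij_betwE by blast

lemma rk_pos_inj: "inj_on (rk_pos xs) {..<length xs}"
  using rk_pos_bij bij_betw_def by blast

lemma rk_pos_surj: "j < length xs \<Longrightarrow> \<exists>r<length xs. rk_pos xs r = j"
  using rk_pos_bij[of xs] unfolding bij_betw_def by (metis imageE lessThan_iff)

lemma rk_mono: "r \<le> r' \<Longrightarrow> r' < length xs \<Longrightarrow> xs ! rk_pos xs r \<le> xs ! rk_pos xs r'"
  using rk_list0_props(4)[of xs] rk_list0_props(1)[of xs]
  unfolding rk_pos_def by (simp add: sorted_iff_nth_mono)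

lemma rk_less: "r < length xs \<Longrightarrow> r' < length xs \<Longrightarrow> xs ! rk_pos xs r < xs ! rk_pos xs r' \<Longrightarrow> r < r'"
  using rk_mono[of r' r xs] by (meson leD le_less_linear)

lemma rk_set_card: "I \<subseteq> {..<length xs} \<Longrightarrow> card (rk_set xs I) = card I"
proof -
  assume I: "I \<subseteq> {..<length xs}"
  have "rk_pos xs ` rk_set xs I = I"
  proof
    show "rk_pos xs ` rk_set xs I \<subseteq> I" by (auto simp: rk_set_def)
    show "I \<subseteq> rk_pos xs ` rk_set xs I"
    proof
      fix j assume "j \<in> I"
      then obtain r where "r < length xs" "rk_pos xs r = j" using I rk_pos_surj by blast
      then show "j \<in> rk_pos xs ` rk_set xs I" using \<open>j \<in> I\<close> by (auto simp: rk_set_def)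
    qed
  qed
  moreover have "inj_on (rk_pos xs) (rk_set xs I)"
    using rk_pos_inj by (rule inj_on_subset) (auto simp: rk_set_def)
  ultimately show ?thesis by (metis card_image)
qed

lemma sample_eq:
  assumes I: "I \<subseteq> {..<length xs}"
  shows "sample_sorted xs I = map (\<lambda>r. xs ! rk_pos xs r) (rk_sl xs I)"
  unfolding sample_sorted_def
proof (rule properties_for_sort)
  have fR: "finite (rk_set xs I)" by (simp add: rk_set_def)
  have fI: "finite I" using I finite_subset by blast
  have inj: "inj_on (rk_pos xs) (rk_set xs I)"
    using rk_pos_inj by (rule inj_on_subset) (auto simp: rk_set_def)
  have img: "rk_pos xs ` rk_set xs I = I"
  proof
    show "rk_pos xs ` rk_set xs I \<subseteq> I" by (auto simp: rk_set_def)
    show "I \<subseteq> rk_pos xs ` rk_set xs I"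
    proof
      fix j assume "j \<in> I"
      then obtain r where "r < length xs" "rk_pos xs r = j" using I rk_pos_surj by blast
      then show "j \<in> rk_pos xs ` rk_set xs I" using \<open>j \<in> I\<close> by (auto simp: rk_set_def)
    qed
  qed
  have "mset (map (\<lambda>r. xs ! rk_pos xs r) (rk_sl xs I)) = image_mset (\<lambda>r. xs ! rk_pos xs r) (mset_set (rk_set xs I))"
    by (simp add: rk_sl_def msl fR)
  also have "\<dots> = image_mset (\<lambda>j. xs ! j) (image_mset (rk_pos xs) (mset_set (rk_set xs I)))"
    by (simp add: image_mset.compositionality o_def)
  also have "image_mset (rk_pos xs) (mset_set (rk_set xs I)) = mset_set I"
    using image_mset_mset_set[OF inj] img by simp
  also have "image_mset (\<lambda>j. xs ! j) (mset_set I) = mset (map (\<lambda>j. xs ! j) (sorted_list_of_set I))"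
    by (simp add: msl fI)
  finally show "mset (map (\<lambda>r. xs ! rk_pos xs r) (rk_sl xs I)) = mset (map (\<lambda>j. xs ! j) (sorted_list_of_set I))" .
  show "sorted (map (\<lambda>r. xs ! rk_pos xs r) (rk_sl xs I))"
  proof (rule sorted_map_mono)
    show "sorted (rk_sl xs I)" by (simp add: rk_sl_def)
    show "mono_on (set (rk_sl xs I)) (\<lambda>r. xs ! rk_pos xs r)"
      by (rule mono_onI) (use fR in \<open>auto simp: rk_sl_def rk_set_def intro: rk_mono\<close>)
  qed
qed

lemma strict_sorted_nth_less_iff:
  fixes L :: "nat list"
  assumes "sorted_wrt (<) L" "i < length L"
  shows "(L ! i < t) = (i < length (filter (\<lambda>x. x < t) L))"
  using assms
proof (induction L arbitrary: i)
  case Nil then show ?case by simp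
next
  case (Cons x L)
  show ?case
  proof (cases "x < t")
    case True
    show ?thesis
    proof (cases i)
      case 0 then show ?thesis using True by simp
    next
      case (Suc i')
      then show ?thesis using Cons True by simp
    qed
  next
    case False
    have f: "filter (\<lambda>x. x < t) (x # L) = []"
      using Cons.prems(1) False by (auto simp: filter_empty_conv)
    have "\<not> (x # L) ! i < t"
    proof (cases i)
      case 0 then show ?thesis using False by simp
    next
      case (Suc i')
      then have "L ! i' \<in> set L" using Cons.prems(2) by simp
      then have "x < L ! i'" using Cons.prems(1) by simp
      then show ?thesis using False Suc by simp
    qed
    then show ?thesis using f by simp
  qed
qed

lemma cnt:
  assumes I: "I \<subseteq> {..<length xs}" and t: "t \<le> length xs" and i: "i < card I"
  shows "(rk_sl xs I ! i < t) = (i < card (I \<inter> rk_pos xs ` {..<t}))"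
proof -
  have fR: "finite (rk_set xs I)" by (simp add: rk_set_def)
  have len: "length (rk_sl xs I) = card I" using rk_set_card[OF I] by (simp add: rk_sl_def)
  have "(rk_sl xs I ! i < t) = (i < length (filter (\<lambda>x. x < t) (rk_sl xs I)))"
    by (rule strict_sorted_nth_less_iff) (use i len in \<open>simp_all add: rk_sl_def\<close>)
  also have "length (filter (\<lambda>x. x < t) (rk_sl xs I)) = card ({x. x < t} \<inter> rk_set xs I)"
    by (simp add: rk_sl_def distinct_length_filter fR)
  also have "{x. x < t} \<inter> rk_set xs I = {r. r < t \<and> rk_pos xs r \<in> I}"
    using t by (auto simp: rk_set_def)
  also have "card {r. r < t \<and> rk_pos xs r \<in> I} = card (I \<inter> rk_pos xs ` {..<t})"
  proof -
    have "inj_on (rk_pos xs) {r. r < t \<and> rk_pos xs r \<in> I}"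
      using rk_pos_inj by (rule inj_on_subset) (use t in auto)
    moreover have "rk_pos xs ` {r. r < t \<and> rk_pos xs r \<in> I} = I \<inter> rk_pos xs ` {..<t}" by auto
    ultimately show ?thesis by (metis card_image)
  qed
  finally show ?thesis .
qed



lemma idx_facts:
  fixes g :: real
  assumes n: "0 < n" and k: "k \<le> n" and s1: "1 \<le> s" and g: "g > 0"
  defines "r \<equiv> real k * real s / real n"
  shows "1 \<le> idx_u n k s g" "idx_u n k s g \<le> s" "real (idx_u n k s g) \<ge> r - g"
    "idx_u n k s g = 1 \<or> real (idx_u n k s g) < r - g + 1"
    "1 \<le> idx_v n k s g" "idx_v n k s g \<le> s" "real (idx_v n k s g) < r + g + 1"
    "idx_v n k s g = s \<or> real (idx_v n k s g) \<ge> r + g"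
    "idx_u n k s g \<le> idx_v n k s g" "r \<le> real s" "r \<ge> 0"
proof -
  have r0: "r \<ge> 0" unfolding r_def by simp
  have rs: "r \<le> real s" unfolding r_def using n k
    by (simp add: field_simps mult_right_mono)
  show "r \<le> real s" "r \<ge> 0" by fact+
  have cu1: "\<lceil>r - g\<rceil> \<le> int s" using rs g by (simp add: ceiling_le_iff)
  have cv1: "\<lceil>r + g\<rceil> \<ge> 1" using r0 g by (simp add: le_ceiling_iff)
  have u: "idx_u n k s g = nat (max \<lceil>r - g\<rceil> 1)" unfolding idx_u_def r_def ..
  have v: "idx_v n k s g = nat (min \<lceil>r + g\<rceil> (int s))" unfolding idx_v_def r_def ..
  show "1 \<le> idx_u n k s g" unfolding u by simp
  show "idx_u n k s g \<le> s" unfolding u using cu1 s1 by simp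
  show "real (idx_u n k s g) \<ge> r - g" unfolding u by (simp add: max_def; linarith?)
  show "idx_u n k s g = 1 \<or> real (idx_u n k s g) < r - g + 1"
    unfolding u by (simp add: max_def; linarith?)
  have mv: "min \<lceil>r + g\<rceil> (int s) \<ge> 1" using cv1 s1 by linarith
  show "1 \<le> idx_v n k s g" unfolding v using mv by linarith
  show "idx_v n k s g \<le> s" unfolding v by simp
  show "real (idx_v n k s g) < r + g + 1"
    unfolding v using cv1 by (simp add: min_def; linarith?)
  show "idx_v n k s g = s \<or> real (idx_v n k s g) \<ge> r + g"
    unfolding v using cv1 by (simp add: min_def; linarith?)
  have cm: "\<lceil>r - g\<rceil> \<le> \<lceil>r + g\<rceil>" using g by (intro ceiling_mono) simp
  have "max \<lceil>r - g\<rceil> 1 \<le> min \<lceil>r + g\<rceil> (int s)"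
    using cu1 mv cm s1 by linarith
  then show "idx_u n k s g \<le> idx_v n k s g" unfolding u v by (rule nat_mono)
qed



lemma good_event:
  fixes xs :: "'a::linorder list" and g :: real
  assumes nlen: "length xs = n" and n2: "n \<ge> 2" and k1: "1 \<le> k" and kn: "k \<le> n"
    and s1: "1 \<le> s" and sn: "s \<le> n - 1" and g: "g > 0"
    and I: "I \<subseteq> {..<n}" and cI: "card I = s"
  defines "iu \<equiv> idx_u n k s g" and "iv \<equiv> idx_v n k s g" and "N \<equiv> real n / real s"
  defines "a \<equiv> rk_sl xs I ! (iu - 1)" and "b \<equiv> rk_sl xs I ! (iv - 1)"
  assumes hA: "real a > (real iu - g) * N - 1" and hB: "real a < (real iu - 1 + g) * N"
    and hC: "real b > (real iv - g) * N - 1" and hD: "real b < (real iv - 1 + g) * N"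
  shows "real (comparisons xs k s g I)
                 \<le> real (length xs) + real (min k (length xs - k)) - real s
                   + 2 * g * real (length xs) / real s
         \<and> real (residual_size xs k s g I) < 4 * g * real (length xs) / real s"
proof -
  define r where "r = real k * real s / real n"
  have n0: "0 < n" using n2 by simp
  have snn: "s \<le> n" using sn by simp
  note F = idx_facts[OF n0 kn s1 g, folded r_def iu_def iv_def]
  have N1: "N \<ge> 1" unfolding N_def using snn s1 by simp
  have rN: "r * N = real k" unfolding r_def N_def using n0 s1 by simp
  have gN: "2 * g * real n / real s = 2 * g * N" "4 * g * real n / real s = 4 * g * N"
    unfolding N_def by simp_all
  define LR where "LR = rk_sl xs I"
  have I': "I \<subseteq> {..<length xs}" using I nlen by simp
  have lenLR: "length LR = s" unfolding LR_def rk_sl_def using rk_set_card[OF I'] cI by simp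
  have setLR: "set LR = rk_set xs I" unfolding LR_def rk_sl_def by (simp add: rk_set_def)
  have ssLR: "sorted_wrt (<) LR" unfolding LR_def rk_sl_def by simp
  have LRn: "\<And>i. i < s \<Longrightarrow> LR ! i < n" using setLR lenLR nlen
    by (metis (no_types, lifting) mem_Collect_eq nth_mem rk_set_def)
  have iu1: "iu - 1 < s" and iv1: "iv - 1 < s" using F by auto
  have an: "a < n" and bn: "b < n" using LRn iu1 iv1 by (auto simp: a_def b_def LR_def)
  have ab: "a \<le> b"
  proof -
    have "sorted LR" unfolding LR_def rk_sl_def by simp
    then show ?thesis unfolding a_def b_def LR_def[symmetric] using F iv1 lenLR
      by (intro sorted_nth_mono) auto
  qed
  have samp: "sample_sorted xs I = map (\<lambda>r. xs ! rk_pos xs r) LR"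
    unfolding LR_def by (rule sample_eq[OF I'])
  define u where "u = xs ! rk_pos xs a"
  define v where "v = xs ! rk_pos xs b"
  have pu: "pivot_u xs k s g I = u"
    unfolding pivot_u_def ystar_def samp u_def a_def LR_def[symmetric] iu_def[symmetric] nlen
    using iu1 lenLR by simp
  have pv: "pivot_v xs k s g I = v"
    unfolding pivot_v_def ystar_def samp v_def b_def LR_def[symmetric] iv_def[symmetric] nlen
    using iv1 lenLR by simp
  have inj: "inj_on (rk_pos xs) A" if "A \<subseteq> {..<n}" for A
    using rk_pos_inj[of xs] that nlen by (metis inj_on_subset)
  have ex: "\<exists>r<n. rk_pos xs r = j" if "j < n" for j using rk_pos_surj[of j xs] that nlen by simp
  have lt: "r < r'" if "r < n" "r' < n" "xs ! rk_pos xs r < xs ! rk_pos xs r'" for r r'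
    using rk_less[of r xs r'] that nlen by simp
  have cL: "card {j\<in>{..<n}. xs ! j < u} \<le> a"
  proof -
    have "{j\<in>{..<n}. xs ! j < u} \<subseteq> rk_pos xs ` {..<a}"
    proof
      fix j assume "j \<in> {j\<in>{..<n}. xs ! j < u}"
      then have j: "j < n" "xs ! j < u" by auto
      obtain r where r: "r < n" "rk_pos xs r = j" using ex[OF j(1)] by blast
      have "r < a" using lt[OF r(1) an] j(2) r(2) by (simp add: u_def)
      then show "j \<in> rk_pos xs ` {..<a}" using r(2) by blast
    qed
    then have "card {j\<in>{..<n}. xs ! j < u} \<le> card (rk_pos xs ` {..<a})"
      by (intro card_mono) auto
    also have "\<dots> \<le> a" using card_image_le[of "{..<a}" "rk_pos xs"] by simp
    finally show ?thesis .
  qed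
  have cR: "card {j\<in>{..<n}. xs ! j > v} \<le> n - Suc b"
  proof -
    have "{j\<in>{..<n}. xs ! j > v} \<subseteq> rk_pos xs ` {b<..<n}"
    proof
      fix j assume "j \<in> {j\<in>{..<n}. xs ! j > v}"
      then have j: "j < n" "xs ! j > v" by auto
      obtain r where r: "r < n" "rk_pos xs r = j" using ex[OF j(1)] by blast
      have "b < r" using lt[OF bn r(1)] j(2) r(2) by (simp add: v_def)
      then show "j \<in> rk_pos xs ` {b<..<n}" using r by auto
    qed
    then have "card {j\<in>{..<n}. xs ! j > v} \<le> card (rk_pos xs ` {b<..<n})"
      by (intro card_mono) auto
    also have "\<dots> \<le> n - Suc b" using card_image_le[of "{b<..<n}" "rk_pos xs"] by simp
    finally show ?thesis .
  qed
  have cM: "card {j\<in>{..<n}. u < xs ! j \<and> xs ! j < v} \<le> b - Suc a"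
  proof -
    have "{j\<in>{..<n}. u < xs ! j \<and> xs ! j < v} \<subseteq> rk_pos xs ` {a<..<b}"
    proof
      fix j assume "j \<in> {j\<in>{..<n}. u < xs ! j \<and> xs ! j < v}"
      then have j: "j < n" "u < xs ! j" "xs ! j < v" by auto
      obtain r where r: "r < n" "rk_pos xs r = j" using ex[OF j(1)] by blast
      have "a < r" using lt[OF an r(1)] j(2) r(2) by (simp add: u_def)
      moreover have "r < b" using lt[OF r(1) bn] j(3) r(2) by (simp add: v_def)
      ultimately show "j \<in> rk_pos xs ` {a<..<b}" using r by auto
    qed
    then have "card {j\<in>{..<n}. u < xs ! j \<and> xs ! j < v} \<le> card (rk_pos xs ` {a<..<b})"
      by (intro card_mono) auto
    also have "\<dots> \<le> b - Suc a" using card_image_le[of "{a<..<b}" "rk_pos xs"] by simp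
    finally show ?thesis .
  qed
  have C1: "card {j\<in>{..<n}. j \<notin> I \<and> xs ! j < v} + (iv - 1) \<le> b"
  proof -
    define Bs where "Bs = rk_pos xs ` {..<b}"
    have cBs: "card Bs = b" unfolding Bs_def using inj[of "{..<b}"] bn
      by (simp add: card_image)
    have sub: "{j\<in>{..<n}. j \<notin> I \<and> xs ! j < v} \<subseteq> Bs - I"
    proof
      fix j assume "j \<in> {j\<in>{..<n}. j \<notin> I \<and> xs ! j < v}"
      then have j: "j < n" "j \<notin> I" "xs ! j < v" by auto
      obtain r where r: "r < n" "rk_pos xs r = j" using ex[OF j(1)] by blast
      have "r < b" using lt[OF r(1) bn] j(3) r(2) by (simp add: v_def)
      then show "j \<in> Bs - I" using r j(2) by (auto simp: Bs_def)
    qed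
    have fBs: "finite Bs" by (simp add: Bs_def)
    have cD: "card (Bs - I) = card Bs - card (Bs \<inter> I)"
      using fBs by (simp add: card_Diff_subset_Int)
    have X: "iv - 1 \<le> card (I \<inter> Bs)"
    proof (cases "iv \<ge> 2")
      case True
      have "LR ! (iv - 2) < LR ! (iv - 1)"
        using ssLR True iv1 lenLR by (intro sorted_wrt_nth_less[of "(<)"]) auto
      then have "LR ! (iv - 2) < b" by (simp add: b_def LR_def)
      moreover have "(LR ! (iv - 2) < b) = (iv - 2 < card (I \<inter> rk_pos xs ` {..<b}))"
        unfolding LR_def by (rule cnt[OF I']) (use bn nlen iv1 cI in auto)
      ultimately show ?thesis using True by (simp add: Bs_def)
    qed simp
    have "card {j\<in>{..<n}. j \<notin> I \<and> xs ! j < v} \<le> card (Bs - I)"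
      by (rule card_mono) (use fBs sub in auto)
    moreover have "card (Bs \<inter> I) \<le> card Bs" by (rule card_mono) (use fBs in auto)
    ultimately show ?thesis using cD cBs X by (simp add: Int_commute)
  qed
  have C2: "card {j\<in>{..<n}. j \<notin> I \<and> xs ! j > u} + (s - iu) \<le> n - Suc a"
  proof -
    define As where "As = rk_pos xs ` {a<..<n}"
    have "inj_on (rk_pos xs) {a<..<n}" by (rule inj) auto
    then have cAs: "card As = n - Suc a" unfolding As_def
      by (simp add: card_image)
    have sub: "{j\<in>{..<n}. j \<notin> I \<and> xs ! j > u} \<subseteq> As - I"
    proof
      fix j assume "j \<in> {j\<in>{..<n}. j \<notin> I \<and> xs ! j > u}"
      then have j: "j < n" "j \<notin> I" "xs ! j > u" by auto
      obtain r where r: "r < n" "rk_pos xs r = j" using ex[OF j(1)] by blast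
      have "a < r" using lt[OF an r(1)] j(3) r(2) by (simp add: u_def)
      then show "j \<in> As - I" using r j(2) by (auto simp: As_def)
    qed
    have fAs: "finite As" by (simp add: As_def)
    have cD: "card (As - I) = card As - card (As \<inter> I)"
      using fAs by (simp add: card_Diff_subset_Int)
    define Xa where "Xa = card (I \<inter> rk_pos xs ` {..<Suc a})"
    have Xa: "Xa \<le> iu"
    proof (cases "iu < s")
      case True
      have "LR ! (iu - 1) < LR ! iu"
        using ssLR True lenLR F by (intro sorted_wrt_nth_less[of "(<)"]) auto
      then have "\<not> LR ! iu < Suc a" by (simp add: a_def LR_def)
      moreover have "(LR ! iu < Suc a) = (iu < Xa)"
        unfolding LR_def Xa_def by (rule cnt[OF I']) (use an nlen True cI in auto)
      ultimately show ?thesis by simp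
    next
      case False
      have "Xa \<le> card I" unfolding Xa_def
        by (rule card_mono) (use I finite_subset in auto)
      then show ?thesis using False cI by simp
    qed
    have "I \<subseteq> (I \<inter> rk_pos xs ` {..<Suc a}) \<union> (I \<inter> As)"
    proof
      fix j assume j: "j \<in> I"
      then have "j < n" using I by auto
      then obtain r where r: "r < n" "rk_pos xs r = j" using ex by blast
      then show "j \<in> (I \<inter> rk_pos xs ` {..<Suc a}) \<union> (I \<inter> As)"
        using j by (cases "r < Suc a") (auto simp: As_def)
    qed
    then have "card I \<le> card ((I \<inter> rk_pos xs ` {..<Suc a}) \<union> (I \<inter> As))"
      by (rule card_mono[rotated]) (use fAs in simp)
    also have "\<dots> \<le> Xa + card (I \<inter> As)" unfolding Xa_def by (rule card_Un_le)
    finally have "s \<le> Xa + card (I \<inter> As)" using cI by simp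
    moreover have "card {j\<in>{..<n}. j \<notin> I \<and> xs ! j > u} \<le> card (As - I)"
      by (rule card_mono) (use fAs sub in auto)
    moreover have "card (As \<inter> I) \<le> card As" by (rule card_mono) (use fAs in auto)
    ultimately show ?thesis using cD cAs Xa by (simp add: Int_commute)
  qed
  have Npos: "N > 0" using N1 by simp
  have sN: "real s * N = real n" unfolding N_def using s1 by simp
  have kN: "k = r * N" using rN by simp
  have res: "real (residual_size xs k s g I) < 4 * g * N"
  proof -
    define CL where "CL = card {j\<in>{..<n}. xs ! j < u}"
    define CR where "CR = card {j\<in>{..<n}. xs ! j > v}"
    define CM where "CM = card {j\<in>{..<n}. u < xs ! j \<and> xs ! j < v}"
    have cases: "residual_size xs k s g I = 0 \<or> (k \<le> CL \<and> residual_size xs k s g I = CL)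
       \<or> (n - CR < k \<and> residual_size xs k s g I = CR) \<or> residual_size xs k s g I = CM"
      unfolding residual_size_def Let_def pu pv nlen CL_def CR_def CM_def by auto
    have g4: "0 < 4 * g * N" using g Npos by simp
    show ?thesis
    proof -
      { assume h: "k \<le> CL" "residual_size xs k s g I = CL"
        have "real a < 4 * g * N"
        proof (cases "iu = 1")
          case True
          then have "real a < g * N" using hB by simp
          then show ?thesis using g Npos by simp
        next
          case False
          then have "real iu - 1 + g < r" using F(4) by simp
          then have "(real iu - 1 + g) * N < r * N" using Npos by (rule mult_strict_right_mono)
          then have "real a < real k" using hB rN by simp
          then show ?thesis using h cL unfolding CL_def by simp
        qed
        then have ?thesis using h cL unfolding CL_def by simp }
      moreover
      { assume h: "n - CR < k" "residual_size xs k s g I = CR"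
        have "real (n - Suc b) < 4 * g * N"
        proof (cases "iv = s")
          case True
          then have "real b > real n - g * N - 1" using hC sN by (simp add: algebra_simps)
          then show ?thesis using bn g Npos by (simp add: of_nat_diff)
        next
          case False
          then have "real iv - g \<ge> r" using F(8) by simp
          then have "(real iv - g) * N \<ge> r * N" using Npos by (intro mult_right_mono) auto
          then have "real b > real k - 1" using hC rN by simp
          then have "k \<le> b" by simp
          then show ?thesis using h cR bn unfolding CR_def by simp
        qed
        then have ?thesis using h cR unfolding CR_def by simp }
      moreover
      { assume h: "residual_size xs k s g I = CM"
        have "real (b - Suc a) < 4 * g * N"
        proof (cases "Suc a \<le> b")
          case True
          have "real iv - real iu - 1 + 2 * g < 4 * g" using F(3,7) by simp
          then have "(real iv - real iu - 1 + 2 * g) * N < (4 * g) * N"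
            using Npos by (rule mult_strict_right_mono)
          moreover have "(real iv - real iu - 1 + 2 * g) * N = (real iv - 1 + g) * N - (real iu - g) * N"
            by (simp add: algebra_simps)
          ultimately show ?thesis using True hB hD hA by (simp add: of_nat_diff)
        qed (use g4 in simp)
        then have ?thesis using h cM unfolding CM_def by simp }
      ultimately show ?thesis using cases g4 by auto
    qed
  qed
  have cmp: "real (comparisons xs k s g I) \<le> real n + real (min k (n - k)) - real s + 2 * g * N"
  proof -
    have g2: "0 \<le> 2 * g * N" using g Npos by simp
    consider (eq) "u = v" | (lo) "u \<noteq> v" "real k < real n / 2" | (hi) "u \<noteq> v" "\<not> real k < real n / 2"
      by blast
    then show ?thesis
    proof cases
      case eq
      then have "comparisons xs k s g I = n - s" unfolding comparisons_def Let_def pu pv nlen by simp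
      then show ?thesis using snn g2 by (simp add: of_nat_diff)
    next
      case lo
      define C where "C = card {j\<in>{..<n}. j \<notin> I \<and> xs ! j < v}"
      have c: "comparisons xs k s g I = (n - s) + C"
        unfolding comparisons_def Let_def pu pv nlen C_def using lo by simp
      have mk: "min k (n - k) = k" using lo by simp
      have P1: "(real iv - 1) * (N - 1) \<le> (r + g) * (N - 1)"
        using F(7) N1 by (intro mult_right_mono) auto
      have e1: "(real iv - 1 + g) * N = (real iv - 1) * (N - 1) + (real iv - 1) + g * N"
        by (simp add: algebra_simps)
      have e2: "(r + g) * (N - 1) = r * N - r + g * N - g" by (simp add: algebra_simps)
      have "real C + (real iv - 1) \<le> real b" using C1 F(5) unfolding C_def
        by (simp add: of_nat_diff flip: of_nat_add)
      then have "real C \<le> real k + 2 * g * N" using hD e1 e2 P1 rN F(11) g by linarith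
      then show ?thesis using c mk snn by (simp add: of_nat_diff)
    next
      case hi
      define C where "C = card {j\<in>{..<n}. j \<notin> I \<and> xs ! j > u}"
      have c: "comparisons xs k s g I = (n - s) + C"
        unfolding comparisons_def Let_def pu pv nlen C_def using hi by simp
      have mk: "min k (n - k) = n - k" using hi by simp
      have P2: "(r - g) * (N - 1) \<le> real iu * (N - 1)"
        using F(3) N1 by (intro mult_right_mono) auto
      have e1: "(real iu - g) * N = real iu * (N - 1) + real iu - g * N"
        by (simp add: algebra_simps)
      have e2: "(r - g) * (N - 1) = r * N - r - g * N + g" by (simp add: algebra_simps)
      have "real C + (real s - real iu) \<le> real n - real a - 1" using C2 F(2) an unfolding C_def
        by (simp add: of_nat_diff flip: of_nat_add)
      then have "real C \<le> real n - real k + 2 * g * N" using hA e1 e2 P2 rN F(10) g by linarith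
      then show ?thesis using c mk snn kn by (simp add: of_nat_diff)
    qed
  qed
  show ?thesis using res cmp unfolding nlen gN by simp
qed



lemma card_init: "t \<le> length xs \<Longrightarrow> card (rk_pos xs ` {..<t}) = t"
  using rk_pos_inj[of xs] by (simp add: card_image inj_on_subset)

lemma init_sub: "t \<le> length xs \<Longrightarrow> rk_pos xs ` {..<t} \<subseteq> {..<length xs}"
proof
  fix j assume "t \<le> length xs" "j \<in> rk_pos xs ` {..<t}"
  then obtain r where "r < t" "j = rk_pos xs r" by blast
  then show "j \<in> {..<length xs}" using rk_pos_lt[of r xs] \<open>t \<le> length xs\<close> by simp
qed

lemma lt_nat_ceil: "a < nat \<lceil>y\<rceil> \<Longrightarrow> real a < y"
  by linarith

lemma nat_floor_le: "nat \<lfloor>y\<rfloor> \<le> a \<Longrightarrow> real a > y - 1"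
  by linarith

lemma init_all: "rk_pos xs ` {..<length xs} = {..<length xs}"
  using rk_pos_bij[of xs] by (simp add: bij_betw_def)

lemma bad_lower:
  fixes g :: real
  assumes nlen: "length xs = n" and s1: "1 \<le> s" and snn: "s \<le> n" and g: "g > 0"
    and i1: "1 \<le> i" and i_s: "i \<le> s"
  defines "t \<equiv> min n (nat \<lceil>(real i - 1 + g) * (real n / real s)\<rceil>)"
  shows "real (card {I\<in>{I. I \<subseteq> {..<n} \<and> card I = s}. card (I \<inter> rk_pos xs ` {..<t}) \<le> i - 1})
         \<le> exp (- 2 * g\<^sup>2 / real s) * real (n choose s)"
proof (cases "t = n")
  case True
  have E: "{I\<in>{I. I \<subseteq> {..<n} \<and> card I = s}. card (I \<inter> rk_pos xs ` {..<t}) \<le> i - 1} = {}"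
  proof -
    have "card (I \<inter> rk_pos xs ` {..<t}) = s" if "I \<subseteq> {..<n}" "card I = s" for I
      using that init_all[of xs] nlen True by (simp add: Int_absorb2)
    then show ?thesis using i1 i_s by auto
  qed
  show ?thesis by (subst E) simp
next
  case False
  then have t: "t = nat \<lceil>(real i - 1 + g) * (real n / real s)\<rceil>" "t < n"
    unfolding t_def by auto
  have n0: "real n > 0" using s1 snn by simp
  have "real t \<ge> (real i - 1 + g) * (real n / real s)" using t(1) by linarith
  then have "real t * real s / real n \<ge> (real i - 1 + g) * (real n / real s) * real s / real n"
    using n0 by (intro divide_right_mono mult_right_mono) auto
  also have "(real i - 1 + g) * (real n / real s) * real s / real n = real i - 1 + g"
    using n0 s1 by simp
  finally have tt: "real i - 1 + g \<le> real t * real s / real n" .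
  have ct: "card (rk_pos xs ` {..<t}) = t" using card_init[of t xs] t(2) nlen by simp
  have j: "real (i - 1) \<le> real (card (rk_pos xs ` {..<t})) * real s / real n - g"
    unfolding ct using tt i1 by (simp add: of_nat_diff)
  show ?thesis
    by (rule lower_tail[OF _ s1 snn g j]) (use init_sub[of t xs] t(2) nlen in simp)
qed

lemma bad_upper:
  fixes g :: real
  assumes nlen: "length xs = n" and s1: "1 \<le> s" and snn: "s \<le> n" and g: "g > 0"
    and i1: "1 \<le> i" and i_s: "i \<le> s"
  defines "t \<equiv> nat \<lfloor>(real i - g) * (real n / real s)\<rfloor>"
  shows "real (card {I\<in>{I. I \<subseteq> {..<n} \<and> card I = s}. i \<le> card (I \<inter> rk_pos xs ` {..<t})})
         \<le> exp (- 2 * g\<^sup>2 / real s) * real (n choose s)"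
proof (cases "(real i - g) * (real n / real s) < 0")
  case True
  then have "t = 0" unfolding t_def by simp
  then have E: "{I\<in>{I. I \<subseteq> {..<n} \<and> card I = s}. i \<le> card (I \<inter> rk_pos xs ` {..<t})} = {}"
    using i1 by auto
  show ?thesis by (subst E) simp
next
  case False
  have n0: "real n > 0" using s1 snn by simp
  have yn: "(real i - g) * (real n / real s) \<le> real n"
  proof -
    have "(real i - g) * (real n / real s) \<le> real s * (real n / real s)"
      using i_s g n0 s1 by (intro mult_right_mono) auto
    then show ?thesis using s1 by simp
  qed
  have tr: "real t \<le> (real i - g) * (real n / real s)" unfolding t_def using False by linarith
  have tn: "t \<le> n" using tr yn by linarith
  have "real t * real s / real n \<le> (real i - g) * (real n / real s) * real s / real n"
    using n0 tr by (intro divide_right_mono mult_right_mono) auto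
  also have "(real i - g) * (real n / real s) * real s / real n = real i - g"
    using n0 s1 by simp
  finally have j: "real i \<ge> real (card (rk_pos xs ` {..<t})) * real s / real n + g"
    using card_init[of t xs] tn nlen by simp
  show ?thesis
    by (rule upper_tail[OF _ s1 snn g j]) (use init_sub[of t xs] tn nlen in simp)
qed



theorem corollary3p4:
  fixes xs :: "'a::linorder list" and k s :: nat and g :: real
  assumes "length xs \<ge> 2" and "1 \<le> k" and "k \<le> length xs"
    and "1 \<le> s" and "s \<le> length xs - 1" and "g > 0"
  shows "measure_pmf.prob (sample_dist (length xs) s)
           {I. real (comparisons xs k s g I)
                 \<le> real (length xs) + real (min k (length xs - k)) - real s
                   + 2 * g * real (length xs) / real s
             \<and> real (residual_size xs k s g I) < 4 * g * real (length xs) / real s}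
         \<ge> 1 - 4 * exp (- 2 * g\<^sup>2 / real s)"
proof -
  define n where "n = length xs"
  have nlen: "length xs = n" by (simp add: n_def)
  have n2: "n \<ge> 2" and k1: "1 \<le> k" and kn: "k \<le> n" and s1: "1 \<le> s" and sn: "s \<le> n - 1"
    and g: "g > 0" using assms by (simp_all add: n_def)
  have n0: "0 < n" using n2 by simp
  have snn: "s \<le> n" using sn by simp
  define iu where "iu = idx_u n k s g"
  define iv where "iv = idx_v n k s g"
  define N where "N = real n / real s"
  define r where "r = real k * real s / real n"
  note F = idx_facts[OF n0 kn s1 g, folded r_def iu_def iv_def]
  have Npos: "N > 0" unfolding N_def using n0 s1 by simp
  have sN: "real s * N = real n" unfolding N_def using s1 by simp
  define e where "e = exp (- 2 * g\<^sup>2 / real s)"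
  define S where "S = {I. I \<subseteq> {..<n} \<and> card I = s}"
  define E where "E = {I. real (comparisons xs k s g I)
                 \<le> real (length xs) + real (min k (length xs - k)) - real s
                   + 2 * g * real (length xs) / real s
             \<and> real (residual_size xs k s g I) < 4 * g * real (length xs) / real s}"
  define X where "X = (\<lambda>I t. card (I \<inter> rk_pos xs ` {..<t}))"
  define t1 where "t1 = min n (nat \<lceil>(real iu - 1 + g) * N\<rceil>)"
  define t2 where "t2 = nat \<lfloor>(real iu - g) * N\<rfloor>"
  define t3 where "t3 = nat \<lfloor>(real iv - g) * N\<rfloor>"
  define t4 where "t4 = min n (nat \<lceil>(real iv - 1 + g) * N\<rceil>)"
  define B1 where "B1 = {I\<in>S. X I t1 \<le> iu - 1}"
  define B2 where "B2 = {I\<in>S. iu \<le> X I t2}"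
  define B3 where "B3 = {I\<in>S. iv \<le> X I t3}"
  define B4 where "B4 = {I\<in>S. X I t4 \<le> iv - 1}"
  have fS: "finite S" unfolding S_def
    by (rule finite_subset[of _ "Pow {..<n}"]) auto
  have cS: "card S = n choose s" unfolding S_def using n_subsets[of "{..<n}" s] by simp
  have cSpos: "card S > 0" using cS snn by simp
  have t2n: "t2 \<le> n" and t3n: "t3 \<le> n"
  proof -
    have "(real iu - g) * N \<le> real s * N" "(real iv - g) * N \<le> real s * N"
      using F(2) F(6) g Npos by (intro mult_right_mono; simp)+
    then show "t2 \<le> n" "t3 \<le> n" unfolding t2_def t3_def using sN by linarith+
  qed
  have good: "S - (B1 \<union> B2 \<union> B3 \<union> B4) \<subseteq> S \<inter> E"
  proof
    fix I assume "I \<in> S - (B1 \<union> B2 \<union> B3 \<union> B4)"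
    then have I: "I \<subseteq> {..<n}" and cI: "card I = s" and S: "I \<in> S"
      and x1: "\<not> X I t1 \<le> iu - 1" and x2: "\<not> iu \<le> X I t2"
      and x3: "\<not> iv \<le> X I t3" and x4: "\<not> X I t4 \<le> iv - 1"
      unfolding B1_def B2_def B3_def B4_def S_def by auto
    have I': "I \<subseteq> {..<length xs}" using I nlen by simp
    define a where "a = rk_sl xs I ! (iu - 1)"
    define b where "b = rk_sl xs I ! (iv - 1)"
    have iu1: "iu - 1 < card I" and iv1: "iv - 1 < card I" using F cI by auto
    have "a < t1" unfolding a_def using cnt[OF I' _ iu1, of t1] x1 nlen
      by (simp add: X_def t1_def)
    then have hB: "real a < (real iu - 1 + g) * N" unfolding t1_def
      by (intro lt_nat_ceil) simp
    have "b < t4" unfolding b_def using cnt[OF I' _ iv1, of t4] x4 nlen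
      by (simp add: X_def t4_def)
    then have hD: "real b < (real iv - 1 + g) * N" unfolding t4_def
      by (intro lt_nat_ceil) simp
    have "\<not> a < t2" unfolding a_def using cnt[OF I' _ iu1, of t2] x2 nlen t2n
      by (simp add: X_def)
    then have hA: "real a > (real iu - g) * N - 1" unfolding t2_def
      by (intro nat_floor_le) simp
    have "\<not> b < t3" unfolding b_def using cnt[OF I' _ iv1, of t3] x3 nlen t3n
      by (simp add: X_def)
    then have hC: "real b > (real iv - g) * N - 1" unfolding t3_def
      by (intro nat_floor_le) simp
    have hA': "real (rk_sl xs I ! (idx_u n k s g - 1)) > (real (idx_u n k s g) - g) * (real n / real s) - 1"
      using hA unfolding a_def iu_def N_def .
    have hB': "real (rk_sl xs I ! (idx_u n k s g - 1)) < (real (idx_u n k s g) - 1 + g) * (real n / real s)"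
      using hB unfolding a_def iu_def N_def .
    have hC': "real (rk_sl xs I ! (idx_v n k s g - 1)) > (real (idx_v n k s g) - g) * (real n / real s) - 1"
      using hC unfolding b_def iv_def N_def .
    have hD': "real (rk_sl xs I ! (idx_v n k s g - 1)) < (real (idx_v n k s g) - 1 + g) * (real n / real s)"
      using hD unfolding b_def iv_def N_def .
    from good_event[OF nlen n2 k1 kn s1 sn g I cI hA' hB' hC' hD']
    have "I \<in> E" unfolding E_def by (rule CollectI)
    then show "I \<in> S \<inter> E" using S by simp
  qed
  have bB1: "real (card B1) \<le> e * real (card S)"
    using bad_lower[OF nlen s1 snn g F(1) F(2)] unfolding B1_def S_def X_def t1_def N_def cS[unfolded S_def] e_def
    by (simp add: mult.commute)
  have bB2: "real (card B2) \<le> e * real (card S)"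
    using bad_upper[OF nlen s1 snn g F(1) F(2)] unfolding B2_def S_def X_def t2_def N_def cS[unfolded S_def] e_def
    by (simp add: mult.commute)
  have bB3: "real (card B3) \<le> e * real (card S)"
    using bad_upper[OF nlen s1 snn g F(5) F(6)] unfolding B3_def S_def X_def t3_def N_def cS[unfolded S_def] e_def
    by (simp add: mult.commute)
  have bB4: "real (card B4) \<le> e * real (card S)"
    using bad_lower[OF nlen s1 snn g F(5) F(6)] unfolding B4_def S_def X_def t4_def N_def cS[unfolded S_def] e_def
    by (simp add: mult.commute)
  have Q0: "real (card S) - 4 * e * real (card S) \<le> real (card (S \<inter> E))"
  proof -
    define U where "U = B1 \<union> B2 \<union> B3 \<union> B4"
    have US: "U \<subseteq> S" unfolding U_def B1_def B2_def B3_def B4_def by blast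
    have fU: "finite U" using US fS finite_subset by blast
    have "card S \<le> card ((S - U) \<union> U)" by (rule card_mono) (use fS fU in blast)+
    also have "\<dots> \<le> card (S - U) + card U" by (rule card_Un_le)
    finally have c1: "card S \<le> card (S - U) + card U" .
    have "card U \<le> card (B1 \<union> B2 \<union> B3) + card B4" unfolding U_def by (rule card_Un_le)
    also have "card (B1 \<union> B2 \<union> B3) \<le> card (B1 \<union> B2) + card B3" by (rule card_Un_le)
    also have "card (B1 \<union> B2) \<le> card B1 + card B2" by (rule card_Un_le)
    finally have c2: "card U \<le> card B1 + card B2 + card B3 + card B4" by simp
    have "card S \<le> card (S - (B1 \<union> B2 \<union> B3 \<union> B4)) + (card B1 + card B2 + card B3 + card B4)"
      using c1 c2 unfolding U_def by linarith
    moreover have "card (S - (B1 \<union> B2 \<union> B3 \<union> B4)) \<le> card (S \<inter> E)"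
      by (rule card_mono[OF _ good]) (use fS in simp)
    ultimately have "real (card S) \<le> real (card (S \<inter> E)) + real (card B1) + real (card B2) + real (card B3) + real (card B4)"
      by linarith
    then show ?thesis using bB1 bB2 bB3 bB4 by linarith
  qed
  have P: "measure_pmf.prob (sample_dist (length xs) s) E = real (card (S \<inter> E)) / real (card S)"
    unfolding sample_dist_def nlen S_def[symmetric]
    by (rule measure_pmf_of_set) (use fS cSpos in auto)
  have Q: "(1 - 4 * e) * real (card S) \<le> real (card (S \<inter> E))"
    using Q0 by (simp only: left_diff_distrib mult_1)
  have cSr: "real (card S) > 0" using cSpos by simp
  have R: "1 - 4 * e \<le> real (card (S \<inter> E)) / real (card S)"
    using Q by (subst pos_le_divide_eq[OF cSr])
  have "1 - 4 * e \<le> measure_pmf.prob (sample_dist (length xs) s) E"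
    unfolding P by (rule R)
  then show ?thesis unfolding E_def e_def .
qed

end
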